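(* Consider the control system $\dot x=f(x,u)$, $t\ge0$, where $f\colon\mathcal{X}\times\mathcal{U}\to\mathbb{R}^n$ is continuous on a neighborhood $\mathcal{X}\times\mathcal{U}\subseteq\mathbb{R}^n\times\mathbb{R}^m$ of the origin and $f(0,0)=0$. Let $d$ be a nonnegative function defined on a neighborhood of $0\in\mathbb{R}^n$. Suppose the system is locally asymptotically stabilizable and $u$ is a stabilizing feedback (in the sense described in the context) satisfying $\|u(x)\|\le d(x)$ for all $x$ with $\|x\|$ sufficiently small. Write $F_u(x):=f(x,u(x))$, $$g(r):=\Gamma_0\big(f(\mathbb{B}_r(0,0))\big),\qquad h(r):=\sup_{y\in\mathbb{B}_r(0)}\|F_u^{-1}(y)\|.$$ Then $$r\ \le\ g\left(\sqrt{\|d\|_{\mathbb{B}_{h(r)}(0)}^2+h(r)^2}\right)\quad\text{for all sufficiently small } r>0.$$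
   Context: $\mathbb{B}_r(z)$ denotes the open ball of radius $r$ centered at $z$; on $\mathbb{R}^n\times\mathbb{R}^m$ the norm is $\|(x,u)\|=\sqrt{\|x\|^2+\|u\|^2}$. For a set $K$ in a normed space and a point $z^*$, the inradius is $\Gamma_{z^*}(K)=\sup\{\rho\ge0:\mathbb{B}_\rho(z^* )\subseteq K\}$. For a function $d$, $\|d\|_{\mathbb{B}_\rho(0)}:=\sup_{x\in\mathbb{B}_\rho(0)}d(x)$. A stabilizing feedback is a map $u\colon\mathcal{O}\to\mathcal{U}$ on a neighborhood $\mathcal{O}\subseteq\mathcal{X}$ of the origin with $u(0)=0$ such that the origin is a locally asymptotically stable equilibrium (Lyapunov stable and locally attractive) of the closed-loop system $\dot x=f(x,u(x))$, and such that $x\mapsto f(x,u(x))$ is continuous and $\dot x=f(x,u(x))$ has a unique solution for all $t$ from every initial condition in a neighborhood of the origin ($u$ itself need not be continuous); the system is locally asymptotically stabilizable if such a $u$ exists. For such $u$, $F_u$ restricted to a suitable neighborhood of the origin is a homeomorphism onto a neighborhood of the origin, and $F_u^{-1}$ denotes this local inverse. *)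

theory Defs
  imports "HOL-Analysis.Analysis"
begin

definition eball :: "'a::metric_space \<Rightarrow> ereal \<Rightarrow> 'a set" where
  "eball z R = {w. ereal (dist z w) < R}"

definition inradius :: "'a::metric_space \<Rightarrow> 'a set \<Rightarrow> ereal" where
  "inradius z K = Sup {ereal \<rho> | \<rho>. \<rho> \<ge> 0 \<and> ball z \<rho> \<subseteq> K}"

definition sup_on_ball :: "('a::real_normed_vector \<Rightarrow> real) \<Rightarrow> ereal \<Rightarrow> ereal" where
  "sup_on_ball d \<rho> = (SUP x\<in>eball 0 \<rho>. ereal (d x))"

definition ereal_hyp :: "ereal \<Rightarrow> ereal \<Rightarrow> ereal" where
  "ereal_hyp a b = (if a = \<infinity> \<or> b = \<infinity> then \<infinity>
      else ereal (sqrt ((real_of_ereal a)\<^sup>2 + (real_of_ereal b)\<^sup>2)))"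

definition is_solution :: "('a::real_normed_vector \<Rightarrow> 'a) \<Rightarrow> 'a set \<Rightarrow> (real \<Rightarrow> 'a) \<Rightarrow> bool" where
  "is_solution F Ob \<phi> \<longleftrightarrow>
     (\<forall>t\<ge>0. \<phi> t \<in> Ob \<and> (\<phi> has_vector_derivative F (\<phi> t)) (at t within {0..}))"

definition stabilizing_feedback ::
  "('n::real_normed_vector \<times> 'm::real_normed_vector \<Rightarrow> 'n) \<Rightarrow> 'n set \<Rightarrow> 'm set \<Rightarrow> 'n set \<Rightarrow> ('n \<Rightarrow> 'm) \<Rightarrow> bool" where
  "stabilizing_feedback f X U Ob u \<longleftrightarrow>
     Ob \<subseteq> X \<and> 0 \<in> interior Ob \<and> u ` Ob \<subseteq> U \<and> u 0 = 0 \<and>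
     continuous_on Ob (\<lambda>x. f (x, u x)) \<and>
     (\<exists>N. 0 \<in> interior N \<and>
        (\<forall>x0\<in>N. (\<exists>\<phi>. is_solution (\<lambda>x. f (x, u x)) Ob \<phi> \<and> \<phi> 0 = x0) \<and>
                 (\<forall>\<phi> \<psi>. is_solution (\<lambda>x. f (x, u x)) Ob \<phi> \<and> \<phi> 0 = x0 \<and>
                         is_solution (\<lambda>x. f (x, u x)) Ob \<psi> \<and> \<psi> 0 = x0 \<longrightarrow>
                         (\<forall>t\<ge>0. \<phi> t = \<psi> t)))) \<and>
     (\<forall>\<epsilon>>0. \<exists>\<delta>>0. \<forall>\<phi>. is_solution (\<lambda>x. f (x, u x)) Ob \<phi> \<and> norm (\<phi> 0) < \<delta> \<longrightarrow>
                       (\<forall>t\<ge>0. norm (\<phi> t) < \<epsilon>)) \<and>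
     (\<exists>\<eta>>0. \<forall>\<phi>. is_solution (\<lambda>x. f (x, u x)) Ob \<phi> \<and> norm (\<phi> 0) < \<eta> \<longrightarrow>
                  (\<phi> \<longlongrightarrow> 0) at_top)"

end

theory Submission
  imports Defs "HOL-Homology.Invariance_of_Domain"
begin

lemma strict_norm_lt:
  fixes x :: "'a::euclidean_space"
  assumes "open S" "x \<in> S"
  obtains x' where "x' \<in> S" "norm x < norm x'"
proof -
  obtain e where e: "e > 0" "ball x e \<subseteq> S" using assms open_contains_ball by blast
  show ?thesis
  proof (cases "x = 0")
    case True
    obtain v :: 'a where v: "norm v = e/2" using vector_choose_size[of "e/2"] e by auto
    have "v \<in> ball x e" using True v e by (simp add: dist_norm)
    hence "v \<in> S" using e by blast
    moreover have "norm x < norm v" unfolding True v using e by simp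
    ultimately show ?thesis by (rule that)
  next
    case False
    define x' where "x' = (1 + e / (2 * norm x)) *\<^sub>R x"
    have n: "norm x > 0" using False by simp
    have xx: "x' - x = (e / (2 * norm x)) *\<^sub>R x" unfolding x'_def by (simp add: algebra_simps)
    have "dist x x' = norm (x' - x)" by (simp add: dist_norm norm_minus_commute)
    also have "\<dots> = norm ((e / (2 * norm x)) *\<^sub>R x)" by (simp only: xx)
    also have "\<dots> = e/2" using n e by simp
    finally have "dist x x' = e/2" .
    hence "x' \<in> ball x e" using e by simp
    moreover have "norm x' = norm x + e/2" unfolding x'_def using n e
      by (simp add: distrib_right)
    ultimately show ?thesis using that[of x'] e by auto
  qed
qed

theorem theorem4:
  fixes f :: "(real^'n) \<times> (real^'m) \<Rightarrow> real^'n"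
    and X :: "(real^'n) set" and U :: "(real^'m) set"
    and d :: "real^'n \<Rightarrow> real" and Dd :: "(real^'n) set"
    and u :: "real^'n \<Rightarrow> real^'m" and Ob :: "(real^'n) set"
    and V W :: "(real^'n) set" and Finv :: "real^'n \<Rightarrow> real^'n"
  assumes X: "0 \<in> interior X" and U: "0 \<in> interior U"
    and f_cont: "continuous_on (X \<times> U) f"
    and f0: "f (0, 0) = 0"
    and Dd: "0 \<in> interior Dd" and d_nonneg: "\<forall>x\<in>Dd. d x \<ge> 0"
    and stab: "stabilizing_feedback f X U Ob u"
    and u_bound: "\<exists>\<delta>>0. \<forall>x. norm x < \<delta> \<longrightarrow> norm (u x) \<le> d x"
    and V: "0 \<in> interior V" "V \<subseteq> Ob" and W: "0 \<in> interior W"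
    and hom: "homeomorphism V W (\<lambda>x. f (x, u x)) Finv"
  shows "\<forall>\<^sub>F r in at_right 0.
           (let h = (SUP y\<in>ball 0 r. ereal (norm (Finv y)));
                g = (\<lambda>\<rho>. inradius 0 (f ` (eball (0, 0) \<rho> \<inter> X \<times> U)))
            in ereal r \<le> g (ereal_hyp (sup_on_ball d h) h))"
proof -
  obtain \<delta> where \<delta>: "\<delta> > 0" "\<And>x. norm x < \<delta> \<Longrightarrow> norm (u x) \<le> d x" using u_bound by blast
  have ObX: "Ob \<subseteq> X" and uU: "u ` Ob \<subseteq> U" and u0: "u 0 = 0"
    using stab unfolding stabilizing_feedback_def by auto
  have hV: "Finv ` W = V" "continuous_on W Finv" "\<And>y. y \<in> W \<Longrightarrow> f (Finv y, u (Finv y)) = y"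
    "\<And>x. x \<in> V \<Longrightarrow> Finv (f (x, u x)) = x"
    using hom unfolding homeomorphism_def by auto
  have injW: "inj_on Finv W" by (metis hV(3) inj_onI)
  have "0 \<in> V" using V interior_subset by blast
  hence Finv0: "Finv 0 = 0" using hV(4)[of 0] f0 u0 by simp
  have "0 \<in> W" using W interior_subset by blast
  have "isCont Finv 0"
    using continuous_on_interior[OF hV(2) W] by simp
  then obtain e0 where e0: "e0 > 0" "\<And>y. dist y 0 < e0 \<Longrightarrow> dist (Finv y) (Finv 0) < \<delta>"
    using \<delta>(1) unfolding continuous_at_eps_delta by blast
  obtain e1 where e1: "e1 > 0" "ball 0 e1 \<subseteq> W" using W by (meson mem_interior)
  define e where "e = min e0 e1"
  have key: "let h = (SUP y\<in>ball 0 r. ereal (norm (Finv y)));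
                g = (\<lambda>\<rho>. inradius 0 (f ` (eball (0, 0) \<rho> \<inter> X \<times> U)))
            in ereal r \<le> g (ereal_hyp (sup_on_ball d h) h)" if r: "0 < r" "r < e" for r
  proof -
    define h where "h = (SUP y\<in>ball 0 r. ereal (norm (Finv y)))"
    define D where "D = sup_on_ball d h"
    define \<rho> where "\<rho> = ereal_hyp D h"
    have ballW: "ball 0 r \<subseteq> W" using e1 r unfolding e_def by auto
    have small: "norm (Finv y) < \<delta>" if "y \<in> ball 0 r" for y
      using e0(2)[of y] that r Finv0 unfolding e_def by (simp add: dist_norm)
    have opn: "open (Finv ` ball 0 r)"
      by (rule invariance_of_domain) (auto intro: continuous_on_subset[OF hV(2) ballW]
          inj_on_subset[OF injW ballW])
    have strict: "ereal (norm (Finv y)) < h" if y: "y \<in> ball 0 r" for y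
    proof -
      obtain x' where x': "x' \<in> Finv ` ball 0 r" "norm (Finv y) < norm x'"
        using strict_norm_lt[OF opn] y by blast
      then obtain y' where y': "y' \<in> ball 0 r" "x' = Finv y'" by blast
      have "ereal (norm x') \<le> h" unfolding h_def using y' by (auto intro: SUP_upper)
      thus ?thesis using x' by (meson ereal_less(2) less_ereal.simps(1) order_less_le_trans)
    qed
    have cover: "ball 0 r \<subseteq> f ` (eball (0, 0) \<rho> \<inter> X \<times> U)"
    proof
      fix y :: "real^'n" assume y: "y \<in> ball 0 r"
      define x where "x = Finv y"
      have xV: "x \<in> V" using y ballW hV(1) unfolding x_def by blast
      have fx: "f (x, u x) = y" using hV(3) y ballW unfolding x_def by blast
      have xX: "x \<in> X" "u x \<in> U" using xV V ObX uU by auto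
      have hx: "ereal (norm x) < h" using strict y unfolding x_def by simp
      have ux: "norm (u x) \<le> d x" using \<delta>(2) small y unfolding x_def by blast
      have "ereal (dist (0, 0) (x, u x)) < \<rho>"
      proof (cases "h = \<infinity> \<or> D = \<infinity>")
        case True thus ?thesis unfolding \<rho>_def ereal_hyp_def by auto
      next
        case False
        have "x \<in> eball 0 h" unfolding eball_def using hx by simp
        hence Dx: "ereal (d x) \<le> D" unfolding D_def sup_on_ball_def by (rule SUP_upper)
        then obtain Dr where Dr: "D = ereal Dr" using False by (cases D) auto
        obtain hr where hr: "h = ereal hr" using False hx by (cases h) auto
        have 1: "norm x < hr" using hx hr by simp
        have 2: "norm (u x) \<le> Dr" using Dx Dr ux by simp
        have "(norm x)\<^sup>2 < hr\<^sup>2" using 1 by (simp add: power_strict_mono)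
        moreover have "(norm (u x))\<^sup>2 \<le> Dr\<^sup>2" using 2 by (simp add: power_mono)
        ultimately have "sqrt ((norm x)\<^sup>2 + (norm (u x))\<^sup>2) < sqrt (Dr\<^sup>2 + hr\<^sup>2)" by simp
        thus ?thesis unfolding \<rho>_def ereal_hyp_def using Dr hr
          by (simp add: dist_norm norm_Pair)
      qed
      hence "(x, u x) \<in> eball (0, 0) \<rho> \<inter> X \<times> U" unfolding eball_def using xX by simp
      thus "y \<in> f ` (eball (0, 0) \<rho> \<inter> X \<times> U)" using fx by force
    qed
    have "ereal r \<le> inradius 0 (f ` (eball (0, 0) \<rho> \<inter> X \<times> U))"
      unfolding inradius_def using cover r by (intro Sup_upper) auto
    thus ?thesis unfolding h_def D_def \<rho>_def Let_def by simp
  qed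
  have "e > 0" using e0 e1 unfolding e_def by simp
  hence "\<forall>\<^sub>F r in at_right 0. 0 < r \<and> r < e"
    by (simp add: eventually_at_right_field) (auto intro: exI[of _ e])
  thus ?thesis by eventually_elim (use key in blast)
qed

end
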